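(* Let $\kappa$ be an infinite cardinal and let $(\mathcal U_\xi)_{\xi\in\kappa}$ be a family of non-principal ultrafilters on $\kappa$. Then there exists $X\subseteq\kappa$ with $|X|=\kappa$ such that $X\notin\mathcal U_\xi$ for every $\xi\in X$. *)

theory Defs
  imports Main "HOL-Library.Equipollence"
begin

definition ultrafilter_on :: "'a set \<Rightarrow> 'a set set \<Rightarrow> bool" where
  "ultrafilter_on S U \<longleftrightarrow>
     (\<forall>A\<in>U. A \<subseteq> S) \<and> S \<in> U \<and> {} \<notin> U \<and>
     (\<forall>A B. A \<in> U \<longrightarrow> B \<in> U \<longrightarrow> A \<inter> B \<in> U) \<and>
     (\<forall>A B. A \<in> U \<longrightarrow> A \<subseteq> B \<longrightarrow> B \<subseteq> S \<longrightarrow> B \<in> U) \<and>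
     (\<forall>A. A \<subseteq> S \<longrightarrow> A \<in> U \<or> S - A \<in> U)"

definition principal_on :: "'a set \<Rightarrow> 'a set set \<Rightarrow> bool" where
  "principal_on S U \<longleftrightarrow> (\<exists>x\<in>S. U = {A. A \<subseteq> S \<and> x \<in> A})"

definition nonprincipal_ultrafilter_on :: "'a set \<Rightarrow> 'a set set \<Rightarrow> bool" where
  "nonprincipal_ultrafilter_on S U \<longleftrightarrow> ultrafilter_on S U \<and> \<not> principal_on S U"

end

theory Submission
  imports Defs
begin

lemma singleton_not_in:
  assumes "nonprincipal_ultrafilter_on UNIV U" "{x} \<in> U"
  shows False
proof -
  have uf: "ultrafilter_on UNIV U" and np: "\<not> principal_on UNIV U"
    using assms(1) unfolding nonprincipal_ultrafilter_on_def by auto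
  have "U = {A. A \<subseteq> UNIV \<and> x \<in> A}"
  proof (intro set_eqI iffI)
    fix A assume "A \<in> U"
    then have "A \<inter> {x} \<in> U" using uf assms(2) unfolding ultrafilter_on_def by blast
    then have "A \<inter> {x} \<noteq> {}" using uf unfolding ultrafilter_on_def by metis
    then show "A \<in> {A. A \<subseteq> UNIV \<and> x \<in> A}" by auto
  next
    fix A assume "A \<in> {A. A \<subseteq> UNIV \<and> x \<in> A}"
    then show "A \<in> U" using uf assms(2) unfolding ultrafilter_on_def
      by (metis (no_types, lifting) empty_subsetI insert_subset mem_Collect_eq subset_UNIV)
  qed
  then show False using np unfolding principal_on_def by blast
qed

theorem theorem3:
  fixes U :: "'k \<Rightarrow> 'k set set"
  assumes "infinite (UNIV :: 'k set)"
    and "\<And>\<xi>. nonprincipal_ultrafilter_on UNIV (U \<xi>)"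
  shows "\<exists>X :: 'k set. X \<approx> (UNIV :: 'k set) \<and> (\<forall>\<xi>\<in>X. X \<notin> U \<xi>)"
proof -
  have "ordIso2 (card_of ((UNIV::'k set) \<times> (UNIV::'k set))) (card_of (UNIV::'k set))"
    using assms(1) card_of_Times_same_infinite by blast
  then obtain g :: "'k \<times> 'k \<Rightarrow> 'k" where g: "bij_betw g (UNIV \<times> UNIV) UNIV"
    using card_of_ordIso by blast
  then have ginj: "inj g" by (simp add: bij_betw_def)
  define R where "R a = g ` ({a} \<times> UNIV)" for a
  have uf: "\<And>\<xi>. ultrafilter_on UNIV (U \<xi>)"
    using assms(2) unfolding nonprincipal_ultrafilter_on_def by auto
  show ?thesis
  proof (cases "\<exists>a. \<forall>\<xi>\<in>R a. R a \<notin> U \<xi>")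
    case True
    then obtain a where a: "\<forall>\<xi>\<in>R a. R a \<notin> U \<xi>" by blast
    have "bij_betw (\<lambda>b. g (a, b)) UNIV (R a)"
      unfolding R_def bij_betw_def inj_on_def using ginj
      by (auto simp: inj_eq image_iff)
    then have "R a \<approx> (UNIV :: 'k set)"
      using eqpoll_def eqpoll_sym by blast
    then show ?thesis using a by blast
  next
    case False
    then have "\<forall>a. \<exists>\<xi>\<in>R a. R a \<in> U \<xi>" by blast
    then obtain x where x: "\<And>a. x a \<in> R a \<and> R a \<in> U (x a)" by metis
    have disj: "\<And>a b y. y \<in> R a \<Longrightarrow> y \<in> R b \<Longrightarrow> a = b"
      unfolding R_def using ginj by (auto simp: inj_eq)
    have xinj: "inj x"
      by (rule injI) (metis x disj)
    have "bij_betw x UNIV (range x)" using xinj by (simp add: bij_betw_def)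
    then have "range x \<approx> (UNIV :: 'k set)"
      using eqpoll_def eqpoll_sym by blast
    moreover have "\<forall>\<xi>\<in>range x. range x \<notin> U \<xi>"
    proof
      fix \<xi> assume "\<xi> \<in> range x"
      then obtain a where a: "\<xi> = x a" by blast
      show "range x \<notin> U \<xi>"
      proof
        assume "range x \<in> U \<xi>"
        moreover have "R a \<in> U \<xi>" using x a by blast
        ultimately have "range x \<inter> R a \<in> U \<xi>" using uf unfolding ultrafilter_on_def by blast
        moreover have "range x \<inter> R a = {\<xi>}" using x disj a by blast
        ultimately show False using singleton_not_in assms(2) by metis
      qed
    qed
    ultimately show ?thesis by blast
  qed
qed

end
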